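(* Fix $d \in \mathbb{N}$, $0<\eta \le \tfrac12$ and $j \in \mathbb{N}$. Let $\mathcal{C} \subset \mathcal{D}_j$ and let $\mathcal{C} = \mathcal{C}_1 \cup \dots \cup \mathcal{C}_d$ be a fixed $(\eta,d)$-homogeneous colouring of $\mathcal{C}$. Let $\mathcal{U} \subset \mathcal{D}_j$ with $\mathcal{U} \cap \mathcal{C} = \emptyset$ be such that the pair $(\mathcal{C},\mathcal{U})$ is $d$-previsible. Then there is a colouring $\mathcal{U} = \mathcal{U}_1 \cup \dots \cup \mathcal{U}_d$ of $\mathcal{U}$ such that $\{\mathcal{H}_i = \mathcal{C}_i \cup \mathcal{U}_i : 1 \le i \le d\}$ is an $(\eta,d)$-homogeneous colouring of $\mathcal{H} = \mathcal{C} \cup \mathcal{U}$.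
   Context: $\mathcal{D}$ denotes the collection of dyadic subintervals of $[0,1]$ and $\mathcal{D}_j = \{I \in \mathcal{D} : |I| = 2^{-j}\}$. For a collection $\mathcal{A}$ of dyadic intervals and $L \in \mathcal{D}$, write $\mathcal{A} \cap L = \{I \in \mathcal{A} : I \subset L\}$, and $|\mathcal{A}|$ for the cardinality of $\mathcal{A}$. A colouring of a collection $\mathcal{A}$ with $d$ colours is a decomposition $\mathcal{A} = \mathcal{A}_1 \cup \dots \cup \mathcal{A}_d$ into pairwise disjoint (possibly empty) subcollections ($\mathcal{A}_i$ = intervals of colour $i$). For $\mathcal{A} \subset \mathcal{D}_j$, $d \in \mathbb{N}$, $0<\eta\le \tfrac12$, such a decomposition is called an $(\eta,d)$-homogeneous colouring if for every $L \in \mathcal{D}$ with $|L| \ge 2^{-j}$ one of the following holds: either $|\mathcal{A} \cap L| > d$ and $\eta \max_{1\le i\le d} |\mathcal{A}_i \cap L| \le \min_{1 \le i \le d} |\mathcal{A}_i \cap L|$; or $|\mathcal{A} \cap L| \le d$ and $|\mathcal{A}_i \cap L| \le 1$ for each $1 \le i \le d$. For disjoint $\mathcal{C}, \mathcal{U} \subset \mathcal{D}_j$ and $d \in \mathbb{N}$, the pair $(\mathcal{C},\mathcal{U})$ is called $d$-previsible if for every $L \in \mathcal{D}$ with $|L| \ge 2^{-(j-1)}$ and its two dyadic children $L', L''$ (i.e. $L', L'' \in \mathcal{D}$, $L = L' \cup L''$, $|L'| = |L''| = |L|/2$, in either order), the conditions $|(\mathcal{U}\cup\mathcal{C}) \cap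 L'| < d$ and $|(\mathcal{U}\cup\mathcal{C}) \cap L''| \ge d$ imply $\mathcal{U} \cap L'' = \emptyset$ or $\mathcal{C} \cap L'' = \emptyset$. *)

theory Defs
  imports Complex_Main
begin

text \<open>A dyadic subinterval of [0,1] is encoded as a pair (k, m) with m < 2^k,
  standing for the interval [m 2^-k, (m+1) 2^-k], of length 2^-k.\<close>

type_synonym dyad = "nat \<times> nat"

definition dyadic :: "dyad set" where
  "dyadic = {(k, m). m < 2 ^ k}"

definition dyadic_level :: "nat \<Rightarrow> dyad set" where
  "dyadic_level j = {(k, m). k = j \<and> m < 2 ^ k}"

text \<open>Inclusion of dyadic intervals: I \<subseteq> L.\<close>
definition dsub :: "dyad \<Rightarrow> dyad \<Rightarrow> bool" where
  "dsub I L \<longleftrightarrow> fst L \<le> fst I \<and> snd I div 2 ^ (fst I - fst L) = snd L"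

definition restr :: "dyad set \<Rightarrow> dyad \<Rightarrow> dyad set" where
  "restr A L = {I \<in> A. dsub I L}"

definition colouring :: "nat \<Rightarrow> (nat \<Rightarrow> dyad set) \<Rightarrow> dyad set \<Rightarrow> bool" where
  "colouring d col A \<longleftrightarrow>
     (\<Union>i\<in>{1..d}. col i) = A \<and>
     (\<forall>i\<in>{1..d}. \<forall>i'\<in>{1..d}. i \<noteq> i' \<longrightarrow> col i \<inter> col i' = {})"

definition homogeneous_colouring ::
  "real \<Rightarrow> nat \<Rightarrow> nat \<Rightarrow> (nat \<Rightarrow> dyad set) \<Rightarrow> dyad set \<Rightarrow> bool" where
  "homogeneous_colouring \<eta> d j col A \<longleftrightarrow>
     A \<subseteq> dyadic_level j \<and> colouring d col A \<and>
     (\<forall>L\<in>dyadic. fst L \<le> j \<longrightarrow>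
        (card (restr A L) > d \<and>
           \<eta> * real (Max ((\<lambda>i. card (restr (col i) L)) ` {1..d}))
             \<le> real (Min ((\<lambda>i. card (restr (col i) L)) ` {1..d})))
        \<or> (card (restr A L) \<le> d \<and> (\<forall>i\<in>{1..d}. card (restr (col i) L) \<le> 1)))"

text \<open>d-previsibility of the pair (C, U) of disjoint subcollections of D_j.
  The children of L = (k, m) are (k+1, 2m) and (k+1, 2m+1); |L| \<ge> 2^-(j-1) means k + 1 \<le> j.\<close>
definition previsible :: "nat \<Rightarrow> nat \<Rightarrow> dyad set \<Rightarrow> dyad set \<Rightarrow> bool" where
  "previsible d j C U \<longleftrightarrow>
     (\<forall>L\<in>dyadic. fst L + 1 \<le> j \<longrightarrow>
       (\<forall>L' L''. {L', L''} = {(fst L + 1, 2 * snd L), (fst L + 1, 2 * snd L + 1)} \<longrightarrow>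
          card (restr (U \<union> C) L') < d \<longrightarrow> card (restr (U \<union> C) L'') \<ge> d \<longrightarrow>
          restr U L'' = {} \<or> restr C L'' = {}))"

end

theory Submission
  imports Defs
begin

lemma dsub_trans:
  assumes "dsub I L0" "dsub L0 L" shows "dsub I L"
proof -
  obtain a b where I: "I = (a,b)" by (cases I)
  obtain a0 b0 where L0: "L0 = (a0,b0)" by (cases L0)
  obtain k m where L: "L = (k,m)" by (cases L)
  have h1: "a0 \<le> a" "b div 2^(a-a0) = b0" using assms(1) I L0 by (auto simp: dsub_def)
  have h2: "k \<le> a0" "b0 div 2^(a0-k) = m" using assms(2) L0 L by (auto simp: dsub_def)
  have "a - k = (a - a0) + (a0 - k)" using h1 h2 by simp
  hence "b div 2^(a-k) = b div 2^(a-a0) div 2^(a0-k)" by (simp add: power_add div_mult2_eq)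
  thus ?thesis using h1 h2 I L by (simp add: dsub_def)
qed

lemma dsub_split:
  assumes "k < fst I"
  shows "dsub I (k,m) \<longleftrightarrow> dsub I (Suc k, 2*m) \<or> dsub I (Suc k, 2*m+1)"
proof -
  obtain a b where I: "I = (a,b)" by (cases I)
  have "a - k = Suc (a - Suc k)" using assms I by simp
  hence "(2::nat)^(a-k) = 2^(a - Suc k) * 2" by (simp add: power_Suc2)
  hence e: "b div 2^(a-k) = b div 2^(a - Suc k) div 2" by (simp add: div_mult2_eq)
  have "(t::nat) div 2 = m \<longleftrightarrow> t = 2*m \<or> t = 2*m+1" for t by auto
  thus ?thesis using assms I e by (auto simp: dsub_def)
qed

lemma dsub_children_disj: "\<not> (dsub I (Suc k, 2*m) \<and> dsub I (Suc k, 2*m+1))"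
  by (auto simp: dsub_def)

lemma dsub_cases:
  assumes "dsub L0 (k,m)"
  shows "L0 = (k,m) \<or> dsub L0 (Suc k, 2*m) \<or> dsub L0 (Suc k, 2*m+1)"
proof (cases "fst L0 = k")
  case True thus ?thesis using assms by (cases L0) (auto simp: dsub_def)
next
  case False
  hence "k < fst L0" using assms by (auto simp: dsub_def)
  thus ?thesis using assms dsub_split by blast
qed

lemma dsub_child1: "dsub (Suc k, 2*m) (k,m)" by (auto simp: dsub_def)
lemma dsub_child2: "dsub (Suc k, 2*m+1) (k,m)" by (auto simp: dsub_def)
lemma dsub_refl: "dsub L L" by (auto simp: dsub_def)

lemma dsub_root: "m < 2^k \<Longrightarrow> dsub (k,m) (0,0)" by (auto simp: dsub_def)

lemma restr_mono: "dsub L0 L \<Longrightarrow> restr X L0 \<subseteq> restr X L"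
  by (auto simp: restr_def intro: dsub_trans)

lemma restr_Un: "restr (A \<union> B) L = restr A L \<union> restr B L" by (auto simp: restr_def)

lemma finite_level: "finite (dyadic_level j)"
proof -
  have "dyadic_level j \<subseteq> {j} \<times> {..<2^j}" by (auto simp: dyadic_level_def)
  thus ?thesis by (rule finite_subset) auto
qed

lemma restr_finite: "X \<subseteq> dyadic_level j \<Longrightarrow> finite (restr X L)"
  by (rule finite_subset[OF _ finite_level[of j]]) (auto simp: restr_def)

lemma restr_split:
  assumes "X \<subseteq> dyadic_level j" "k < j"
  shows "restr X (k,m) = restr X (Suc k, 2*m) \<union> restr X (Suc k, 2*m+1)"
        "restr X (Suc k, 2*m) \<inter> restr X (Suc k, 2*m+1) = {}"
proof -
  have "\<And>I. I \<in> X \<Longrightarrow> k < fst I" using assms by (auto simp: dyadic_level_def)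
  thus "restr X (k,m) = restr X (Suc k, 2*m) \<union> restr X (Suc k, 2*m+1)"
    using dsub_split unfolding restr_def by blast
  show "restr X (Suc k, 2*m) \<inter> restr X (Suc k, 2*m+1) = {}"
    using dsub_children_disj unfolding restr_def by blast
qed

lemma cnt_split:
  assumes "X \<subseteq> dyadic_level j" "k < j"
  shows "card (restr X (k,m)) = card (restr X (Suc k, 2*m)) + card (restr X (Suc k, 2*m+1))"
  using restr_split[OF assms, of m] restr_finite[OF assms(1)] by (simp add: card_Un_disjoint)

lemma restr_top_card:
  assumes "X \<subseteq> dyadic_level j" shows "card (restr X (j,m)) \<le> 1"
proof -
  have "restr X (j,m) \<subseteq> {(j,m)}" using assms by (auto simp: restr_def dyadic_level_def dsub_def)
  from card_mono[OF _ this] show ?thesis by simp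
qed

lemma restr_root: "X \<subseteq> dyadic_level j \<Longrightarrow> restr X (0,0) = X"
  by (auto simp: restr_def dyadic_level_def dsub_def)


abbreviation cnt :: "dyad set \<Rightarrow> dyad \<Rightarrow> nat" where "cnt X L \<equiv> card (restr X L)"

lemma sum_ind: "finite I \<Longrightarrow> (\<Sum>i\<in>I. (if P i then 1 else 0::nat)) = card {i\<in>I. P i}"
  by (simp add: sum.If_cases Int_def)

lemma extend_subset:
  assumes "T \<subseteq> B" "finite B" "card T \<le> n" "n \<le> card B"
  obtains S where "T \<subseteq> S" "S \<subseteq> B" "card S = n"
proof -
  have fT: "finite T" using assms finite_subset by blast
  have "card (B - T) = card B - card T" using assms fT by (simp add: card_Diff_subset)
  hence "n - card T \<le> card (B - T)" using assms by simp
  then obtain X where X: "X \<subseteq> B - T" "card X = n - card T" "finite X"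
    by (rule obtain_subset_with_card_n)
  have "card (T \<union> X) = card T + card X" using X fT by (subst card_Un_disjoint) auto
  thus ?thesis using that[of "T \<union> X"] X assms by auto
qed

locale setting =
  fixes d j :: nat and \<eta> :: real and C U :: "dyad set" and Ccol :: "nat \<Rightarrow> dyad set"
  assumes d1: "d \<ge> 1" and eta0: "0 < \<eta>" and eta2: "\<eta> \<le> 1/2"
    and Clev: "C \<subseteq> dyadic_level j"
    and Chom: "homogeneous_colouring \<eta> d j Ccol C"
    and Ulev: "U \<subseteq> dyadic_level j" and UC: "U \<inter> C = {}"
    and prev: "previsible d j C U"
begin

definition bal :: "(nat \<Rightarrow> nat) \<Rightarrow> bool" where
  "bal f \<longleftrightarrow> (\<forall>i\<in>{1..d}. \<forall>k\<in>{1..d}. \<eta> * real (f i) \<le> real (f k))"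

definition okat :: "dyad set \<Rightarrow> (nat \<Rightarrow> dyad set) \<Rightarrow> dyad \<Rightarrow> bool" where
  "okat A col L \<longleftrightarrow>
     (cnt A L > d \<and> bal (\<lambda>i. cnt (col i) L))
     \<or> (cnt A L \<le> d \<and> (\<forall>i\<in>{1..d}. cnt (col i) L \<le> 1))"

definition Hc :: "(nat \<Rightarrow> dyad set) \<Rightarrow> nat \<Rightarrow> dyad set" where "Hc Uc i = Ccol i \<union> Uc i"

definition allok :: "(nat \<Rightarrow> dyad set) \<Rightarrow> dyad \<Rightarrow> bool" where
  "allok Uc L \<longleftrightarrow> (\<forall>L0. dsub L0 L \<and> fst L0 \<le> j \<longrightarrow> okat (C \<union> U) (Hc Uc) L0)"

definition loc :: "(nat \<Rightarrow> dyad set) \<Rightarrow> dyad \<Rightarrow> bool" where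
  "loc Uc L \<longleftrightarrow> (\<Union>i\<in>{1..d}. Uc i) = restr U L \<and>
     (\<forall>i\<in>{1..d}. \<forall>i'\<in>{1..d}. i \<noteq> i' \<longrightarrow> Uc i \<inter> Uc i' = {})"

definition Aset :: "dyad \<Rightarrow> nat set" where
  "Aset L = {i\<in>{1..d}. restr (Ccol i) L \<noteq> {}}"

lemma Ccol_col: "colouring d Ccol C" using Chom by (simp add: homogeneous_colouring_def)

lemma Ccol_sub: "i \<in> {1..d} \<Longrightarrow> Ccol i \<subseteq> C"
  using Ccol_col by (auto simp: colouring_def)

lemma Ccol_lev: "i \<in> {1..d} \<Longrightarrow> Ccol i \<subseteq> dyadic_level j"
  using Ccol_sub Clev by blast

lemma Hlev: "C \<union> U \<subseteq> dyadic_level j" using Clev Ulev by blast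

lemma loc_sub: "loc Uc L \<Longrightarrow> i \<in> {1..d} \<Longrightarrow> Uc i \<subseteq> restr U L"
  unfolding loc_def by blast

lemma loc_subU: "loc Uc L \<Longrightarrow> i \<in> {1..d} \<Longrightarrow> Uc i \<subseteq> U"
  using loc_sub[of Uc L i] by (auto simp: restr_def)

lemma Hc_lev: "loc Uc L \<Longrightarrow> i \<in> {1..d} \<Longrightarrow> Hc Uc i \<subseteq> dyadic_level j"
  using loc_subU[of Uc L i] Ccol_lev[of i] Ulev by (auto simp: Hc_def)

lemma bal_MaxMin: "bal f \<longleftrightarrow> \<eta> * real (Max (f ` {1..d})) \<le> real (Min (f ` {1..d}))"
proof
  assume b: "bal f"
  have ne: "f ` {1..d} \<noteq> {}" using d1 by auto
  obtain i where i: "i \<in> {1..d}" "Max (f ` {1..d}) = f i" using Max_in[OF _ ne] by auto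
  obtain k where k: "k \<in> {1..d}" "Min (f ` {1..d}) = f k" using Min_in[OF _ ne] by auto
  show "\<eta> * real (Max (f ` {1..d})) \<le> real (Min (f ` {1..d}))" using b i k by (simp add: bal_def)
next
  assume h: "\<eta> * real (Max (f ` {1..d})) \<le> real (Min (f ` {1..d}))"
  show "bal f" unfolding bal_def
  proof (intro ballI)
    fix i k assume ik: "i \<in> {1..d}" "k \<in> {1..d}"
    have "f i \<le> Max (f ` {1..d})" using ik by simp
    hence "\<eta> * real (f i) \<le> \<eta> * real (Max (f ` {1..d}))" using eta0 by simp
    moreover have "Min (f ` {1..d}) \<le> f k" using ik by simp
    ultimately show "\<eta> * real (f i) \<le> real (f k)" using h by linarith
  qed
qed

lemma Cok: "L \<in> dyadic \<Longrightarrow> fst L \<le> j \<Longrightarrow> okat C Ccol L"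
  using Chom by (auto simp: homogeneous_colouring_def okat_def bal_MaxMin)

lemma cnt_sum:
  assumes "(\<Union>i\<in>{1..d}. col i) = X" "\<forall>i\<in>{1..d}. \<forall>i'\<in>{1..d}. i \<noteq> i' \<longrightarrow> col i \<inter> col i' = {}"
    "X \<subseteq> dyadic_level j"
  shows "cnt X L = (\<Sum>i\<in>{1..d}. cnt (col i) L)"
proof -
  have "restr X L = (\<Union>i\<in>{1..d}. restr (col i) L)" using assms(1) by (auto simp: restr_def)
  moreover have "\<forall>i\<in>{1..d}. finite (restr (col i) L)"
    using assms(1,3) by (intro ballI restr_finite[of _ j]) blast
  moreover have "\<forall>i\<in>{1..d}. \<forall>i'\<in>{1..d}. i \<noteq> i' \<longrightarrow> restr (col i) L \<inter> restr (col i') L = {}"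
    using assms(2) by (auto simp: restr_def)
  ultimately show ?thesis by (simp add: card_UN_disjoint)
qed

lemma cnt_CU: "cnt (C \<union> U) L = cnt C L + cnt U L"
  using restr_finite[OF Clev] restr_finite[OF Ulev] UC
  by (subst restr_Un, subst card_Un_disjoint) (auto simp: restr_def)

lemma cnt_Hc:
  assumes "Uc i \<subseteq> U" "i \<in> {1..d}" shows "cnt (Hc Uc i) L = cnt (Ccol i) L + cnt (Uc i) L"
proof -
  have f1: "finite (restr (Ccol i) L)" using restr_finite[OF Ccol_lev[OF assms(2)]] .
  have s: "Uc i \<subseteq> U" using assms(1) .
  hence f2: "finite (restr (Uc i) L)" using restr_finite[of "Uc i" j L] Ulev by blast
  have "restr (Ccol i) L \<inter> restr (Uc i) L = {}" using s Ccol_sub[OF assms(2)] UC by (auto simp: restr_def)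
  thus ?thesis using f1 f2 by (simp add: Hc_def restr_Un card_Un_disjoint)
qed

lemma C_small:
  assumes "L \<in> dyadic" "fst L \<le> j" "cnt C L \<le> d" "i \<in> {1..d}"
  shows "cnt (Ccol i) L = (if i \<in> Aset L then 1 else 0)"
proof -
  have "cnt (Ccol i) L \<le> 1" using Cok[OF assms(1,2)] assms(3,4) by (auto simp: okat_def)
  moreover have "finite (restr (Ccol i) L)" using restr_finite[OF Ccol_lev[OF assms(4)]] .
  ultimately show ?thesis using assms(4)
  proof (cases "i \<in> Aset L")
    case True
    hence "restr (Ccol i) L \<noteq> {}" by (simp add: Aset_def)
    hence "cnt (Ccol i) L > 0" using \<open>finite (restr (Ccol i) L)\<close> by (simp add: card_gt_0_iff)
    thus ?thesis using True \<open>cnt (Ccol i) L \<le> 1\<close> by simp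
  next
    case False
    hence "restr (Ccol i) L = {}" using assms(4) by (simp add: Aset_def)
    thus ?thesis using False by simp
  qed
qed

lemma C_small_card:
  assumes "L \<in> dyadic" "fst L \<le> j" "cnt C L \<le> d"
  shows "card (Aset L) = cnt C L"
proof -
  have "cnt C L = (\<Sum>i\<in>{1..d}. cnt (Ccol i) L)"
    using Ccol_col Clev by (intro cnt_sum) (auto simp: colouring_def)
  also have "\<dots> = (\<Sum>i\<in>{1..d}. (if i \<in> Aset L then 1 else 0))"
    using C_small[OF assms] by simp
  also have "\<dots> = card {i\<in>{1..d}. i \<in> Aset L}" by (rule sum_ind) simp
  also have "{i\<in>{1..d}. i \<in> Aset L} = Aset L" by (auto simp: Aset_def)
  finally show ?thesis by simp
qed

lemma Aset_sub: "Aset L \<subseteq> {1..d}" by (auto simp: Aset_def)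

end

lemma restr_empty[simp]: "restr {} L = {}" by (simp add: restr_def)

context setting begin

lemma restr_other1:
  assumes "X \<subseteq> restr U (Suc k, 2*m+1)" "dsub L0 (Suc k, 2*m)"
  shows "restr X L0 = {}"
proof (rule ccontr)
  assume "restr X L0 \<noteq> {}"
  then obtain x where x: "x \<in> X" "dsub x L0" by (auto simp: restr_def)
  have "dsub x (Suc k, 2*m)" "dsub x (Suc k, 2*m+1)"
    using x assms dsub_trans[of x L0] by (auto simp: restr_def)
  thus False using dsub_children_disj by blast
qed

lemma restr_other2:
  assumes "X \<subseteq> restr U (Suc k, 2*m)" "dsub L0 (Suc k, 2*m+1)"
  shows "restr X L0 = {}"
proof (rule ccontr)
  assume "restr X L0 \<noteq> {}"
  then obtain x where x: "x \<in> X" "dsub x L0" by (auto simp: restr_def)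
  have "dsub x (Suc k, 2*m)" "dsub x (Suc k, 2*m+1)"
    using x assms dsub_trans[of x L0] by (auto simp: restr_def)
  thus False using dsub_children_disj by blast
qed

lemma okat_cong:
  assumes "\<And>i. i \<in> {1..d} \<Longrightarrow> restr (c1 i) L = restr (c2 i) L"
  shows "okat A c1 L = okat A c2 L"
  using assms unfolding okat_def bal_def by simp

lemma Hc_restr1:
  assumes "loc U2 (Suc k, 2*m+1)" "dsub L0 (Suc k, 2*m)" "i \<in> {1..d}"
  shows "restr (Hc (\<lambda>i. U1 i \<union> U2 i) i) L0 = restr (Hc U1 i) L0"
proof -
  have "restr (U2 i) L0 = {}" using restr_other1[OF loc_sub[OF assms(1,3)] assms(2)] .
  thus ?thesis by (auto simp: Hc_def restr_def)
qed

lemma Hc_restr2: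
  assumes "loc U1 (Suc k, 2*m)" "dsub L0 (Suc k, 2*m+1)" "i \<in> {1..d}"
  shows "restr (Hc (\<lambda>i. U1 i \<union> U2 i) i) L0 = restr (Hc U2 i) L0"
proof -
  have "restr (U1 i) L0 = {}" using restr_other2[OF loc_sub[OF assms(1,3)] assms(2)] .
  thus ?thesis by (auto simp: Hc_def restr_def)
qed

lemma combine:
  assumes k: "k < j"
    and l1: "loc U1 (Suc k, 2*m)" and a1: "allok U1 (Suc k, 2*m)"
    and l2: "loc U2 (Suc k, 2*m+1)" and a2: "allok U2 (Suc k, 2*m+1)"
    and ok: "okat (C \<union> U) (Hc (\<lambda>i. U1 i \<union> U2 i)) (k,m)"
  shows "loc (\<lambda>i. U1 i \<union> U2 i) (k,m) \<and> allok (\<lambda>i. U1 i \<union> U2 i) (k,m)"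
proof
  have sp: "restr U (k,m) = restr U (Suc k, 2*m) \<union> restr U (Suc k, 2*m+1)"
       "restr U (Suc k, 2*m) \<inter> restr U (Suc k, 2*m+1) = {}"
    using restr_split[OF Ulev k] by auto
  show "loc (\<lambda>i. U1 i \<union> U2 i) (k,m)"
    unfolding loc_def
  proof
    have "(\<Union>i\<in>{1..d}. U1 i \<union> U2 i) = (\<Union>i\<in>{1..d}. U1 i) \<union> (\<Union>i\<in>{1..d}. U2 i)" by auto
    also have "\<dots> = restr U (k, m)" using l1 l2 sp(1) unfolding loc_def by simp
    finally show "(\<Union>i\<in>{1..d}. U1 i \<union> U2 i) = restr U (k, m)" .
    show "\<forall>i\<in>{1..d}. \<forall>i'\<in>{1..d}. i \<noteq> i' \<longrightarrow> (U1 i \<union> U2 i) \<inter> (U1 i' \<union> U2 i') = {}"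
    proof (intro ballI impI)
      fix i i' assume ii: "i \<in> {1..d}" "i' \<in> {1..d}" "i \<noteq> i'"
      have "U1 i \<inter> U1 i' = {}" "U2 i \<inter> U2 i' = {}" using l1 l2 ii unfolding loc_def by auto
      moreover have "U1 i \<inter> U2 i' = {}"
        using loc_sub[OF l1 ii(1)] loc_sub[OF l2 ii(2)] sp(2) by blast
      moreover have "U2 i \<inter> U1 i' = {}"
        using loc_sub[OF l1 ii(2)] loc_sub[OF l2 ii(1)] sp(2) by blast
      ultimately show "(U1 i \<union> U2 i) \<inter> (U1 i' \<union> U2 i') = {}" by blast
    qed
  qed
  show "allok (\<lambda>i. U1 i \<union> U2 i) (k,m)"
    unfolding allok_def
  proof (intro allI impI)
    fix L0 assume L0: "dsub L0 (k, m) \<and> fst L0 \<le> j"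
    have "L0 = (k,m) \<or> dsub L0 (Suc k, 2*m) \<or> dsub L0 (Suc k, 2*m+1)"
      using dsub_cases[of L0 k m] L0 by simp
    then consider "L0 = (k,m)" | "dsub L0 (Suc k, 2*m)" | "dsub L0 (Suc k, 2*m+1)" by (elim disjE) simp_all
    thus "okat (C \<union> U) (Hc (\<lambda>i. U1 i \<union> U2 i)) L0"
    proof cases
      case 1 thus ?thesis using ok by simp
    next
      case 2
      have "okat (C \<union> U) (Hc (\<lambda>i. U1 i \<union> U2 i)) L0 = okat (C \<union> U) (Hc U1) L0"
        by (rule okat_cong) (rule Hc_restr1[OF l2 2])
      moreover have "okat (C \<union> U) (Hc U1) L0" using a1 2 L0 unfolding allok_def by (cases L0) simp
      ultimately show ?thesis by simp
    next
      case 3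
      have "okat (C \<union> U) (Hc (\<lambda>i. U1 i \<union> U2 i)) L0 = okat (C \<union> U) (Hc U2) L0"
        by (rule okat_cong) (rule Hc_restr2[OF l1 3])
      moreover have "okat (C \<union> U) (Hc U2) L0" using a2 3 L0 unfolding allok_def by (cases L0) simp
      ultimately show ?thesis by simp
    qed
  qed
qed

lemma cnt_combine:
  assumes k: "k < j" and l1: "loc U1 (Suc k, 2*m)" and l2: "loc U2 (Suc k, 2*m+1)" and i: "i \<in> {1..d}"
  shows "cnt (Hc (\<lambda>i. U1 i \<union> U2 i) i) (k,m) = cnt (Hc U1 i) (Suc k, 2*m) + cnt (Hc U2 i) (Suc k, 2*m+1)"
proof -
  have "Hc (\<lambda>i. U1 i \<union> U2 i) i \<subseteq> dyadic_level j"
    using Hc_lev[OF l1 i] Hc_lev[OF l2 i] by (auto simp: Hc_def)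
  from cnt_split[OF this k, of m] show ?thesis
    using Hc_restr1[OF l2 dsub_refl i] Hc_restr2[OF l1 dsub_refl i] by simp
qed

lemma allok_here: "allok Uc L \<Longrightarrow> fst L \<le> j \<Longrightarrow> okat (C \<union> U) (Hc Uc) L"
  using dsub_refl unfolding allok_def by blast

lemma big_bal: "allok Uc L \<Longrightarrow> fst L \<le> j \<Longrightarrow> cnt (C \<union> U) L > d \<Longrightarrow> bal (\<lambda>i. cnt (Hc Uc i) L)"
  using allok_here unfolding okat_def by fastforce

lemma small_S:
  assumes L: "L \<in> dyadic" "fst L \<le> j" and N: "cnt (C \<union> U) L \<le> d"
  obtains S where "S \<subseteq> {1..d} - Aset L" "card S = cnt U L"
proof -
  have cC: "card (Aset L) = cnt C L" using C_small_card[OF L] N cnt_CU by simp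
  have fA: "finite (Aset L)" unfolding Aset_def by auto
  have "card ({1..d} - Aset L) = card {1..d} - card (Aset L)" by (rule card_Diff_subset[OF fA Aset_sub])
  hence "card ({1..d} - Aset L) = d - cnt C L" using cC by simp
  hence "cnt U L \<le> card ({1..d} - Aset L)" using N cnt_CU by simp
  then obtain T where T: "T \<subseteq> {1..d} - Aset L" "card T = cnt U L" "finite T"
    by (rule obtain_subset_with_card_n)
  show ?thesis by (rule that[OF T(1,2)])
qed

lemma small:
  assumes L: "L \<in> dyadic" "fst L \<le> j" and N: "cnt (C \<union> U) L \<le> d"
    and S: "S \<subseteq> {1..d}" "S \<inter> Aset L = {}" "card S = cnt U L"
  shows "\<exists>Uc. loc Uc L \<and> allok Uc L \<and> (\<forall>i\<in>{1..d}. cnt (Uc i) L = (if i \<in> S then 1 else 0))"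
proof -
  define R where "R = restr U L"
  have fR: "finite R" unfolding R_def using restr_finite[OF Ulev] .
  have fS: "finite S" using S(1) finite_subset by blast
  obtain g where g: "bij_betw g R S" using finite_same_card_bij[OF fR fS] S(3) R_def by auto
  define Uc where "Uc i = {x\<in>R. g x = i}" for i
  have gR: "x \<in> R \<Longrightarrow> g x \<in> S" for x using g by (auto simp: bij_betw_def)
  have lo: "loc Uc L" unfolding loc_def
  proof
    show "(\<Union>i\<in>{1..d}. Uc i) = restr U L" using gR S(1) by (auto simp: Uc_def R_def)
    show "\<forall>i\<in>{1..d}. \<forall>i'\<in>{1..d}. i \<noteq> i' \<longrightarrow> Uc i \<inter> Uc i' = {}" by (auto simp: Uc_def)
  qed
  have rU: "restr (Uc i) L = Uc i" for i by (auto simp: Uc_def R_def restr_def)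
  have cU: "cnt (Uc i) L = (if i \<in> S then 1 else 0)" for i
  proof (cases "i \<in> S")
    case True
    have "Uc i \<subseteq> R" by (auto simp: Uc_def)
    have inj: "inj_on g (Uc i)" using inj_on_subset[OF bij_betw_imp_inj_on[OF g] \<open>Uc i \<subseteq> R\<close>] .
    have "g ` (Uc i) = {i}"
    proof
      show "g ` Uc i \<subseteq> {i}" by (auto simp: Uc_def)
      have "i \<in> g ` R" using True g by (simp add: bij_betw_def)
      then obtain x where "x \<in> R" "g x = i" by blast
      thus "{i} \<subseteq> g ` Uc i" by (auto simp: Uc_def)
    qed
    hence "card (Uc i) = 1" using card_image[OF inj] by simp
    thus ?thesis using True rU by simp
  next
    case False
    hence "Uc i = {}" using gR by (auto simp: Uc_def)
    hence "restr (Uc i) L = {}" using rU by simp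
    thus ?thesis using False by simp
  qed
  have cC: "cnt C L \<le> d" using N cnt_CU by simp
  have al: "allok Uc L" unfolding allok_def
  proof (intro allI impI)
    fix L0 assume L0: "dsub L0 L \<and> fst L0 \<le> j"
    have "cnt (C \<union> U) L0 \<le> cnt (C \<union> U) L"
      using card_mono[OF restr_finite[OF Hlev] restr_mono[of L0 L "C \<union> U"]] L0 by blast
    hence N0: "cnt (C \<union> U) L0 \<le> d" using N by simp
    have "cnt (Hc Uc i) L0 \<le> 1" if i: "i \<in> {1..d}" for i
    proof -
      have "cnt (Hc Uc i) L0 \<le> cnt (Hc Uc i) L"
        using card_mono[OF restr_finite[OF Hc_lev[OF lo i]] restr_mono[of L0 L]] L0 by blast
      also have "\<dots> = cnt (Ccol i) L + cnt (Uc i) L" using cnt_Hc[of Uc i, OF loc_subU[OF lo i] i] .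
      also have "\<dots> \<le> 1" using C_small[OF L cC i] cU[of i] S(2) by auto
      finally show ?thesis .
    qed
    thus "okat (C \<union> U) (Hc Uc) L0" using N0 by (simp add: okat_def)
  qed
  show ?thesis using lo al cU by blast
qed

end

lemma divmod_lem:
  assumes "(r::nat) < d" shows "(q*d + r) div d = q" "(q*d + r) mod d = r"
  using assms by auto

context setting begin

lemma bal_range:
  assumes "\<forall>i\<in>{1..d}. a \<le> f i \<and> f i \<le> a + b" "\<eta> * real (a + b) \<le> real a"
  shows "bal f"
  unfolding bal_def
proof (intro ballI)
  fix i k assume ik: "i \<in> {1..d}" "k \<in> {1..d}"
  have "f i \<le> a + b" using assms(1) ik by simp
  hence "real (f i) \<le> real (a + b)" by linarith
  hence "\<eta> * real (f i) \<le> \<eta> * real (a + b)" using eta0 by (simp add: mult_left_mono)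
  also have "\<dots> \<le> real a" using assms(2) .
  also have "\<dots> \<le> real (f k)" using assms(1) ik by simp
  finally show "\<eta> * real (f i) \<le> real (f k)" .
qed

lemma eta_1: "1 \<le> a \<Longrightarrow> \<eta> * real (a + 1) \<le> real a"
proof -
  assume "1 \<le> a"
  hence "real (a+1) / 2 \<le> real a" by simp
  moreover have "\<eta> * real (a + 1) \<le> real (a+1) / 2" using eta2 by (simp add: mult_right_mono)
  ultimately show ?thesis by linarith
qed

lemma eta_2: "2 \<le> a \<Longrightarrow> \<eta> * real (a + 2) \<le> real a"
proof -
  assume "2 \<le> a"
  hence "real (a+2) / 2 \<le> real a" by simp
  moreover have "\<eta> * real (a + 2) \<le> real (a+2) / 2" using eta2 by (simp add: mult_right_mono)
  ultimately show ?thesis by linarith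
qed

lemma Ccol_zero: "restr C L = {} \<Longrightarrow> i \<in> {1..d} \<Longrightarrow> cnt (Ccol i) L = 0"
proof -
  assume "restr C L = {}" "i \<in> {1..d}"
  hence "restr (Ccol i) L = {}" using Ccol_sub[of i] by (auto simp: restr_def)
  thus ?thesis by simp
qed

lemma Aset_zero: "restr C L = {} \<Longrightarrow> Aset L = {}"
  using Ccol_sub by (auto simp: restr_def Aset_def)

lemma child_dyadic: "m < 2^k \<Longrightarrow> (Suc k, 2*m) \<in> dyadic \<and> (Suc k, 2*m+1) \<in> dyadic"
  by (auto simp: dyadic_def)

lemma top_small: "cnt (C \<union> U) (j, m) \<le> d"
  using restr_top_card[OF Hlev, of m] d1 by simp

lemma pureU_aux:
  "j - k = h \<Longrightarrow> m < 2^k \<Longrightarrow> k \<le> j \<Longrightarrow> restr C (k,m) = {} \<Longrightarrow> R \<subseteq> {1..d} \<Longrightarrow>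
   card R = cnt U (k,m) mod d \<Longrightarrow>
   \<exists>Uc. loc Uc (k,m) \<and> allok Uc (k,m) \<and>
     (\<forall>i\<in>{1..d}. cnt (Uc i) (k,m) = cnt U (k,m) div d + (if i \<in> R then 1 else 0))"
proof (induction h arbitrary: k m R rule: less_induct)
  case (less h)
  define n where "n = cnt U (k,m)"
  have L: "(k,m) \<in> dyadic" "fst (k,m) \<le> j" using less.prems by (auto simp: dyadic_def)
  have nN: "cnt (C \<union> U) (k,m) = n" using cnt_CU less.prems(4) by (simp add: n_def)
  show ?case
  proof (cases "n \<le> d")
    case True
    define S where "S = (if n = d then {1..d} else R)"
    have R0: "n = d \<Longrightarrow> R = {}" using less.prems(5,6) d1 finite_subset[of R "{1..d}"] by (auto simp: n_def)
    have S: "S \<subseteq> {1..d}" "S \<inter> Aset (k,m) = {}" "card S = cnt U (k,m)"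
      using less.prems(5,6) True Aset_zero[OF less.prems(4)] by (auto simp: S_def n_def)
    obtain Uc where Uc: "loc Uc (k,m)" "allok Uc (k,m)"
        "\<forall>i\<in>{1..d}. cnt (Uc i) (k,m) = (if i \<in> S then 1 else 0)"
      using small[OF L _ S] nN True by auto
    have "\<forall>i\<in>{1..d}. cnt (Uc i) (k,m) = n div d + (if i \<in> R then 1 else 0)"
    proof
      fix i assume i: "i \<in> {1..d}"
      show "cnt (Uc i) (k,m) = n div d + (if i \<in> R then 1 else 0)"
      proof (cases "n = d")
        case True thus ?thesis using Uc(3) i R0 d1 by (simp add: S_def)
      next
        case False hence "n < d" using \<open>n \<le> d\<close> by simp
        thus ?thesis using Uc(3) i False by (simp add: S_def)
      qed
    qed
    thus ?thesis using Uc(1,2) by (auto simp: n_def)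
  next
    case False
    hence nd: "d < n" by simp
    have kj: "k < j"
    proof (rule ccontr)
      assume "\<not> k < j" hence "k = j" using less.prems(3) by simp
      thus False using top_small[of m] nN nd by simp
    qed
    define P where "P = (Suc k, 2*m)"
    define Q where "Q = (Suc k, 2*m+1)"
    have dyP: "2*m < 2^Suc k" "2*m+1 < 2^Suc k" using less.prems(2) by auto
    have hlt: "j - Suc k < h" using kj less.prems(1) by simp
    have CP: "restr C (Suc k, 2*m) = {}" "restr C (Suc k, 2*m+1) = {}"
      using restr_mono[OF dsub_child1, of C k m] restr_mono[OF dsub_child2, of C k m] less.prems(4) by auto
    define n1 where "n1 = cnt U P"
    define n2 where "n2 = cnt U Q"
    have nsum: "n = n1 + n2" using cnt_split[OF Ulev kj, of m] by (simp add: n_def n1_def n2_def P_def Q_def)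
    define q1 r1 q2 r2 where "q1 = n1 div d" "r1 = n1 mod d" "q2 = n2 div d" "r2 = n2 mod d"
    have r1d: "r1 < d" "r2 < d" using d1 by (auto simp: q1_r1_q2_r2_def)
    have n1e: "n1 = q1*d + r1" "n2 = q2*d + r2" by (simp_all add: q1_r1_q2_r2_def)
    have Rc: "card R = n mod d" using less.prems(6) by (simp add: n_def)
    have fR: "finite R" using less.prems(5) finite_subset by blast
    obtain R1 R2 where R12: "R1 \<subseteq> {1..d}" "R2 \<subseteq> {1..d}" "card R1 = r1" "card R2 = r2"
      and Rind: "\<forall>i\<in>{1..d}. q1 + (if i \<in> R1 then 1 else 0) + (q2 + (if i \<in> R2 then 1 else 0))
                  = n div d + (if i \<in> R then 1 else 0)"
    proof (cases "r1 + r2 < d")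
      case True
      have e: "n = (q1+q2)*d + (r1+r2)" using nsum n1e by (simp add: algebra_simps)
      have nd': "n div d = q1 + q2" "n mod d = r1 + r2" using divmod_lem[OF True] e by auto
      have "r1 \<le> card R" using Rc nd' by simp
      then obtain R1 where R1: "R1 \<subseteq> R" "card R1 = r1" "finite R1" by (rule obtain_subset_with_card_n)
      have c2: "card (R - R1) = r2" using card_Diff_subset[OF R1(3) R1(1)] Rc nd' R1(2) by simp
      show ?thesis
      proof (rule that[of R1 "R - R1"])
        show "R1 \<subseteq> {1..d}" "R - R1 \<subseteq> {1..d}" using R1(1) less.prems(5) by auto
        show "card R1 = r1" "card (R - R1) = r2" using R1(2) c2 by auto
        show "\<forall>i\<in>{1..d}. q1 + (if i \<in> R1 then 1 else 0) + (q2 + (if i \<in> R - R1 then 1 else 0))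
                  = n div d + (if i \<in> R then 1 else 0)" using nd' R1(1) by auto
      qed
    next
      case False
      define r where "r = r1 + r2 - d"
      have rd: "r < d" using r1d by (simp add: r_def)
      have e: "n = (q1+q2+1)*d + r" using nsum n1e False by (simp add: algebra_simps r_def)
      have nd': "n div d = q1 + q2 + 1" "n mod d = r" by (simp_all only: e divmod_lem[OF rd])
      define Q0 where "Q0 = {1..d} - R"
      have cQ0: "card Q0 = d - r" using card_Diff_subset[OF fR less.prems(5)] Rc nd' by (simp add: Q0_def)
      have "r1 - r \<le> card Q0" using cQ0 r1d False by (simp add: r_def)
      then obtain X where X: "X \<subseteq> Q0" "card X = r1 - r" "finite X" by (rule obtain_subset_with_card_n)
      have fQ0: "finite Q0" by (simp add: Q0_def)
      have RQ: "R \<inter> Q0 = {}" by (auto simp: Q0_def)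
      have c1: "card (R \<union> X) = r1"
        using card_Un_disjoint[OF fR X(3)] RQ X(1,2) Rc nd' r1d False by (auto simp: r_def)
      have cQX: "card (Q0 - X) = d - r - (r1 - r)" using card_Diff_subset[OF X(3) X(1)] cQ0 X(2) by simp
      have fQX: "finite (Q0 - X)" using fQ0 by simp
      have c2: "card (R \<union> (Q0 - X)) = r2"
        using card_Un_disjoint[OF fR fQX] RQ cQX Rc nd' r1d False by (auto simp: r_def)
      show ?thesis
      proof (rule that[of "R \<union> X" "R \<union> (Q0 - X)"])
        show "R \<union> X \<subseteq> {1..d}" "R \<union> (Q0 - X) \<subseteq> {1..d}" using less.prems(5) X(1) by (auto simp: Q0_def)
        show "card (R \<union> X) = r1" "card (R \<union> (Q0 - X)) = r2" using c1 c2 by auto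
        show "\<forall>i\<in>{1..d}. q1 + (if i \<in> R \<union> X then 1 else 0) + (q2 + (if i \<in> R \<union> (Q0 - X) then 1 else 0))
                  = n div d + (if i \<in> R then 1 else 0)" using nd' X(1) by (auto simp: Q0_def)
      qed
    qed
    have Rm1: "card R1 = cnt U P mod d" "card R2 = cnt U Q mod d"
      using R12 by (simp_all add: q1_r1_q2_r2_def n1_def n2_def)
    obtain U1 where U1: "loc U1 P" "allok U1 P"
        "\<forall>i\<in>{1..d}. cnt (U1 i) P = cnt U P div d + (if i \<in> R1 then 1 else 0)"
      using less.IH[OF hlt refl dyP(1) _ CP(1) R12(1)] kj Rm1(1) by (auto simp: P_def)
    obtain U2 where U2: "loc U2 Q" "allok U2 Q"
        "\<forall>i\<in>{1..d}. cnt (U2 i) Q = cnt U Q div d + (if i \<in> R2 then 1 else 0)"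
      using less.IH[OF hlt refl dyP(2) _ CP(2) R12(2)] kj Rm1(2) by (auto simp: Q_def)
    define Uc where "Uc = (\<lambda>i. U1 i \<union> U2 i)"
    have UcU: "Uc i \<subseteq> U" if "i \<in> {1..d}" for i
      using loc_subU[OF U1(1) that] loc_subU[OF U2(1) that] by (auto simp: Uc_def)
    have cntL: "cnt (Uc i) (k,m) = n div d + (if i \<in> R then 1 else 0)" if i: "i \<in> {1..d}" for i
    proof -
      have "cnt (Uc i) (k,m) = cnt (Hc Uc i) (k,m)"
        using cnt_Hc[of Uc i "(k,m)", OF UcU[OF i] i] Ccol_zero[OF less.prems(4) i] by simp
      also have "\<dots> = cnt (Hc U1 i) P + cnt (Hc U2 i) Q"
        using cnt_combine[OF kj U1(1)[unfolded P_def] U2(1)[unfolded Q_def] i] by (simp add: Uc_def P_def Q_def)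
      also have "\<dots> = cnt (U1 i) P + cnt (U2 i) Q"
        using cnt_Hc[of U1 i P, OF loc_subU[OF U1(1) i] i] cnt_Hc[of U2 i Q, OF loc_subU[OF U2(1) i] i]
          Ccol_zero[OF CP(1) i] Ccol_zero[OF CP(2) i] by (simp add: P_def Q_def)
      also have "\<dots> = n div d + (if i \<in> R then 1 else 0)"
        using U1(3) U2(3) i Rind by (simp add: q1_r1_q2_r2_def n1_def n2_def)
      finally show ?thesis .
    qed
    have "0 < n div d" using nd d1 div_greater_zero_iff[of n d] by simp
    hence q1: "1 \<le> n div d" by simp
    have ok: "okat (C \<union> U) (Hc Uc) (k,m)"
    proof -
      have "bal (\<lambda>i. cnt (Hc Uc i) (k,m))"
      proof (rule bal_range[of "n div d" _ 1])
        show "\<forall>i\<in>{1..d}. n div d \<le> cnt (Hc Uc i) (k,m) \<and> cnt (Hc Uc i) (k,m) \<le> n div d + 1"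
          using cntL cnt_Hc[of Uc _ "(k,m)", OF UcU] Ccol_zero[OF less.prems(4)] by simp
        show "\<eta> * real (n div d + 1) \<le> real (n div d)" using eta_1[OF q1] .
      qed
      thus ?thesis using nN nd by (simp add: okat_def)
    qed
    have "loc Uc (k,m) \<and> allok Uc (k,m)"
      using combine[OF kj U1(1,2)[unfolded P_def] U2(1,2)[unfolded Q_def]] ok by (simp add: Uc_def)
    thus ?thesis using cntL by (auto simp: n_def)
  qed
qed

lemma pureU:
  "m < 2^k \<Longrightarrow> k \<le> j \<Longrightarrow> restr C (k,m) = {} \<Longrightarrow> R \<subseteq> {1..d} \<Longrightarrow>
   card R = cnt U (k,m) mod d \<Longrightarrow>
   \<exists>Uc. loc Uc (k,m) \<and> allok Uc (k,m) \<and>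
     (\<forall>i\<in>{1..d}. cnt (Uc i) (k,m) = cnt U (k,m) div d + (if i \<in> R then 1 else 0))"
  using pureU_aux by blast

end

lemma greedy:
  fixes f :: "nat \<Rightarrow> nat"
  assumes "finite B" shows "n \<le> card B \<Longrightarrow> \<exists>S\<subseteq>B. card S = n \<and> (\<forall>s\<in>S. \<forall>t\<in>B-S. f s \<le> f t)"
proof (induction n)
  case 0 thus ?case by (intro exI[of _ "{}"]) auto
next
  case (Suc n)
  then obtain S where S: "S \<subseteq> B" "card S = n" "\<forall>s\<in>S. \<forall>t\<in>B-S. f s \<le> f t" by auto
  have fS: "finite S" using S(1) assms finite_subset by blast
  have "card (B - S) = card B - n" using card_Diff_subset[OF fS S(1)] S(2) by simp
  hence "card (B - S) > 0" using Suc.prems by simp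
  hence ne: "B - S \<noteq> {}" by (metis card.empty less_irrefl)
  have fBS: "finite (f ` (B - S))" using assms by simp
  have "Min (f ` (B - S)) \<in> f ` (B - S)" using Min_in[OF fBS] ne by simp
  then obtain t0 where t0: "t0 \<in> B - S" "f t0 = Min (f ` (B - S))" by auto
  have m: "\<forall>t\<in>B-S. f t0 \<le> f t" using t0(2) fBS by simp
  show ?case
  proof (intro exI[of _ "insert t0 S"] conjI)
    show "insert t0 S \<subseteq> B" using t0 S by auto
    show "card (insert t0 S) = Suc n" using t0 S fS by simp
    show "\<forall>s\<in>insert t0 S. \<forall>t\<in>B - insert t0 S. f s \<le> f t" using S(3) m by auto
  qed
qed

context setting begin

definition ind :: "nat set \<Rightarrow> nat \<Rightarrow> nat" where "ind A i = (if i \<in> A then 1 else 0)"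

lemma bal_add: "bal f \<Longrightarrow> bal g \<Longrightarrow> bal (\<lambda>i. f i + g i)"
  unfolding bal_def by (auto simp: distrib_left intro: add_mono)

definition kids :: "nat \<Rightarrow> nat \<Rightarrow> dyad \<Rightarrow> dyad \<Rightarrow> bool" where
  "kids k m P Q \<longleftrightarrow> (P,Q) = ((Suc k,2*m),(Suc k,2*m+1)) \<or> (P,Q) = ((Suc k,2*m+1),(Suc k,2*m))"

lemma kids_node: "kids k m P Q \<Longrightarrow> m < 2^k \<Longrightarrow> k < j \<Longrightarrow>
   P \<in> dyadic \<and> fst P \<le> j \<and> Q \<in> dyadic \<and> fst Q \<le> j"
  unfolding kids_def using child_dyadic by auto

lemma kids_sub: "kids k m P Q \<Longrightarrow> dsub P (k,m) \<and> dsub Q (k,m)"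
  unfolding kids_def using dsub_child1 dsub_child2 by auto

lemma split_gen: "X \<subseteq> dyadic_level j \<Longrightarrow> k < j \<Longrightarrow> kids k m P Q \<Longrightarrow> cnt X (k,m) = cnt X P + cnt X Q"
  unfolding kids_def using cnt_split[of X j k m] by auto

lemma combine_gen:
  assumes kj: "k < j" and PQ: "kids k m P Q" and l1: "loc U1 P" and l2: "loc U2 Q"
  shows "\<forall>i\<in>{1..d}. cnt (Hc (\<lambda>i. U1 i \<union> U2 i) i) (k,m) = cnt (Hc U1 i) P + cnt (Hc U2 i) Q"
    and "allok U1 P \<Longrightarrow> allok U2 Q \<Longrightarrow> okat (C \<union> U) (Hc (\<lambda>i. U1 i \<union> U2 i)) (k,m) \<Longrightarrow>
         loc (\<lambda>i. U1 i \<union> U2 i) (k,m) \<and> allok (\<lambda>i. U1 i \<union> U2 i) (k,m)"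
proof -
  have sw: "(\<lambda>i. U2 i \<union> U1 i) = (\<lambda>i. U1 i \<union> U2 i)" by auto
  show "\<forall>i\<in>{1..d}. cnt (Hc (\<lambda>i. U1 i \<union> U2 i) i) (k,m) = cnt (Hc U1 i) P + cnt (Hc U2 i) Q"
  proof (cases "(P,Q) = ((Suc k,2*m),(Suc k,2*m+1))")
    case True thus ?thesis using cnt_combine[OF kj, of U1 m U2] l1 l2 by auto
  next
    case False hence e: "P = (Suc k,2*m+1)" "Q = (Suc k,2*m)" using PQ by (auto simp: kids_def)
    show ?thesis using cnt_combine[OF kj, of U2 m U1] l1 l2 e sw by auto
  qed
  show "allok U1 P \<Longrightarrow> allok U2 Q \<Longrightarrow> okat (C \<union> U) (Hc (\<lambda>i. U1 i \<union> U2 i)) (k,m) \<Longrightarrow>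
         loc (\<lambda>i. U1 i \<union> U2 i) (k,m) \<and> allok (\<lambda>i. U1 i \<union> U2 i) (k,m)"
  proof (cases "(P,Q) = ((Suc k,2*m),(Suc k,2*m+1))")
    case True thus "allok U1 P \<Longrightarrow> allok U2 Q \<Longrightarrow> okat (C \<union> U) (Hc (\<lambda>i. U1 i \<union> U2 i)) (k,m) \<Longrightarrow> ?thesis"
      using combine[OF kj, of U1 m U2] l1 l2 by auto
  next
    case False hence e: "P = (Suc k,2*m+1)" "Q = (Suc k,2*m)" using PQ by (auto simp: kids_def)
    show "allok U1 P \<Longrightarrow> allok U2 Q \<Longrightarrow> okat (C \<union> U) (Hc (\<lambda>i. U1 i \<union> U2 i)) (k,m) \<Longrightarrow> ?thesis"
      using combine[OF kj, of U2 m U1] l1 l2 e sw by auto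
  qed
qed

lemma prev_use:
  assumes "m < 2^k" "k < j" "kids k m P Q" "cnt (C \<union> U) P < d" "cnt (C \<union> U) Q \<ge> d"
  shows "restr U Q = {} \<or> restr C Q = {}"
proof -
  have L: "(k,m) \<in> dyadic" "fst (k,m) + 1 \<le> j" using assms by (auto simp: dyadic_def)
  have "{P, Q} = {(fst (k,m) + 1, 2 * snd (k,m)), (fst (k,m) + 1, 2 * snd (k,m) + 1)}"
    using assms(3) by (auto simp: kids_def)
  moreover have "U \<union> C = C \<union> U" by blast
  ultimately show ?thesis using prev L assms(4,5) unfolding previsible_def by metis
qed

lemma all_present:
  assumes "L \<in> dyadic" "fst L \<le> j" "cnt C L > d" "i \<in> {1..d}"
  shows "cnt (Ccol i) L \<ge> 1"
proof (rule ccontr)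
  assume "\<not> cnt (Ccol i) L \<ge> 1"
  hence z: "cnt (Ccol i) L = 0" by simp
  have b: "bal (\<lambda>i. cnt (Ccol i) L)" using Cok[OF assms(1,2)] assms(3) by (auto simp: okat_def)
  have "\<forall>i'\<in>{1..d}. cnt (Ccol i') L = 0"
  proof
    fix i' assume "i' \<in> {1..d}"
    hence "\<eta> * real (cnt (Ccol i') L) \<le> 0" using b z assms(4) unfolding bal_def by force
    thus "cnt (Ccol i') L = 0" using eta0 by (simp add: mult_le_0_iff)
  qed
  moreover have "cnt C L = (\<Sum>i\<in>{1..d}. cnt (Ccol i) L)"
    using Ccol_col Clev by (intro cnt_sum) (auto simp: colouring_def)
  ultimately show False using assms(3) by simp
qed

lemma small_cnt:
  assumes "L \<in> dyadic" "fst L \<le> j" "cnt (C \<union> U) L \<le> d" "loc Uc L" "i \<in> {1..d}"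
    "\<forall>i\<in>{1..d}. cnt (Uc i) L = (if i \<in> S then 1 else 0)"
  shows "cnt (Hc Uc i) L = ind (Aset L) i + ind S i"
proof -
  have "cnt C L \<le> d" using assms(3) cnt_CU by simp
  thus ?thesis using cnt_Hc[of Uc i L, OF loc_subU[OF assms(4,5)] assms(5)] C_small[OF assms(1,2) _ assms(5)]
    assms(5,6) by (simp add: ind_def)
qed

end

context setting begin

lemma kids_Q: "kids k m P Q \<Longrightarrow> m < 2^k \<Longrightarrow> \<exists>mq. Q = (Suc k, mq) \<and> mq < 2^Suc k"
  unfolding kids_def by auto

lemma ind_le1: "A \<inter> B = {} \<Longrightarrow> ind A i + ind B i \<le> 1"
  by (auto simp: ind_def)

lemma bal_via:
  assumes "\<forall>i\<in>{1..d}. f i = g i" "bal g" shows "bal f"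
  using assms unfolding bal_def by simp

lemma okat_big:
  assumes "cnt (C \<union> U) L > d" "bal (\<lambda>i. cnt (Hc Uc i) L)"
  shows "okat (C \<union> U) (Hc Uc) L"
  using assms by (simp add: okat_def)

lemma two_small:
  assumes mk: "m < 2^k" "k < j" and PQ: "kids k m P Q"
    and N1: "cnt (C \<union> U) P \<le> d" and N2: "cnt (C \<union> U) Q \<le> d" and N: "cnt (C \<union> U) (k,m) > d"
    and S1: "S1 \<subseteq> {1..d}" "S1 \<inter> Aset P = {}" "card S1 = cnt U P"
    and S2: "S2 \<subseteq> {1..d}" "S2 \<inter> Aset Q = {}" "card S2 = cnt U Q"
    and cov: "\<forall>i\<in>{1..d}. ind (Aset P) i + ind S1 i + (ind (Aset Q) i + ind S2 i) \<ge> 1"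
  shows "\<exists>Uc. loc Uc (k,m) \<and> allok Uc (k,m)"
proof -
  have nd: "P \<in> dyadic" "fst P \<le> j" "Q \<in> dyadic" "fst Q \<le> j" using kids_node[OF PQ mk(1,2)] by auto
  obtain U1 where U1: "loc U1 P" "allok U1 P" "\<forall>i\<in>{1..d}. cnt (U1 i) P = (if i \<in> S1 then 1 else 0)"
    using small[OF nd(1,2) N1 S1] by blast
  obtain U2 where U2: "loc U2 Q" "allok U2 Q" "\<forall>i\<in>{1..d}. cnt (U2 i) Q = (if i \<in> S2 then 1 else 0)"
    using small[OF nd(3,4) N2 S2] by blast
  have y: "\<forall>i\<in>{1..d}. cnt (Hc (\<lambda>i. U1 i \<union> U2 i) i) (k,m)
      = ind (Aset P) i + ind S1 i + (ind (Aset Q) i + ind S2 i)"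
    using combine_gen(1)[OF mk(2) PQ U1(1) U2(1)] small_cnt[OF nd(1,2) N1 U1(1) _ U1(3)]
      small_cnt[OF nd(3,4) N2 U2(1) _ U2(3)] by simp
  have "bal (\<lambda>i. cnt (Hc (\<lambda>i. U1 i \<union> U2 i) i) (k,m))"
  proof (rule bal_range[of 1 _ 1])
    show "\<forall>i\<in>{1..d}. 1 \<le> cnt (Hc (\<lambda>i. U1 i \<union> U2 i) i) (k, m) \<and> cnt (Hc (\<lambda>i. U1 i \<union> U2 i) i) (k, m) \<le> 1 + 1"
    proof
      fix i assume i: "i \<in> {1..d}"
      have a: "ind (Aset P) i + ind S1 i \<le> 1" by (rule ind_le1) (use S1(2) in blast)
      have b: "ind (Aset Q) i + ind S2 i \<le> 1" by (rule ind_le1) (use S2(2) in blast)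
      show "1 \<le> cnt (Hc (\<lambda>i. U1 i \<union> U2 i) i) (k, m) \<and> cnt (Hc (\<lambda>i. U1 i \<union> U2 i) i) (k, m) \<le> 1 + 1"
        using y[rule_format, OF i] cov[rule_format, OF i] a b by linarith
    qed
    show "\<eta> * real (1 + 1) \<le> real (1::nat)" using eta_1[of 1] by simp
  qed
  hence "okat (C \<union> U) (Hc (\<lambda>i. U1 i \<union> U2 i)) (k,m)" using okat_big N by blast
  thus ?thesis using combine_gen(2)[OF mk(2) PQ U1(1) U2(1) U1(2) U2(2)] by blast
qed

end

context setting begin

lemma Aset_fin: "finite (Aset L)" unfolding Aset_def by auto

lemma card_compl: "card ({1..d} - Aset L) = d - card (Aset L)"
  using card_Diff_subset[OF Aset_fin Aset_sub] by simp

lemma small_small: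
  assumes mk: "m < 2^k" "k < j" and N1: "cnt (C \<union> U) (Suc k, 2*m) \<le> d"
    and N2: "cnt (C \<union> U) (Suc k, 2*m+1) \<le> d" and N: "cnt (C \<union> U) (k,m) > d"
  shows "\<exists>Uc. loc Uc (k,m) \<and> allok Uc (k,m)"
proof -
  define P where "P = (Suc k, 2*m)"
  define Q where "Q = (Suc k, 2*m+1)"
  have PQ: "kids k m P Q" by (simp add: kids_def P_def Q_def)
  have nd: "P \<in> dyadic" "fst P \<le> j" "Q \<in> dyadic" "fst Q \<le> j" using kids_node[OF PQ mk(1,2)] by auto
  have L: "(k,m) \<in> dyadic" "fst (k,m) \<le> j" using mk by (auto simp: dyadic_def)
  define A1 A2 where "A1 = Aset P" "A2 = Aset Q"
  have N1': "cnt (C \<union> U) P \<le> d" and N2': "cnt (C \<union> U) Q \<le> d" using N1 N2 by (simp_all add: P_def Q_def)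
  have cC1: "cnt C P \<le> d" and cC2: "cnt C Q \<le> d" using N1' N2' cnt_CU by (simp_all add: cnt_CU)
  have xi: "cnt (Ccol i) (k,m) = ind A1 i + ind A2 i" if i: "i \<in> {1..d}" for i
    using split_gen[OF Ccol_lev[OF i] mk(2) PQ] C_small[OF nd(1,2) cC1 i] C_small[OF nd(3,4) cC2 i]
    by (simp add: ind_def A1_A2_def)
  show ?thesis
  proof (cases "cnt C (k,m) > d")
    case True
    obtain S1 where S1: "S1 \<subseteq> {1..d} - Aset P" "card S1 = cnt U P" using small_S[OF nd(1,2) N1'] by blast
    obtain S2 where S2: "S2 \<subseteq> {1..d} - Aset Q" "card S2 = cnt U Q" using small_S[OF nd(3,4) N2'] by blast
    have cov: "\<forall>i\<in>{1..d}. ind (Aset P) i + ind S1 i + (ind (Aset Q) i + ind S2 i) \<ge> 1"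
    proof
      fix i assume i: "i \<in> {1..d}"
      have "cnt (Ccol i) (k,m) \<ge> 1" using all_present[OF L True i] .
      thus "ind (Aset P) i + ind S1 i + (ind (Aset Q) i + ind S2 i) \<ge> 1" using xi[OF i] by (simp add: A1_A2_def)
    qed
    show ?thesis
      by (rule two_small[OF mk PQ N1' N2' N _ _ S1(2) _ _ S2(2) cov]) (use S1(1) S2(1) in auto)
  next
    case False
    hence cCL: "cnt C (k,m) \<le> d" by simp
    have dis: "A1 \<inter> A2 = {}"
    proof (rule ccontr)
      assume "A1 \<inter> A2 \<noteq> {}"
      then obtain i where i: "i \<in> A1" "i \<in> A2" by blast
      hence i1: "i \<in> {1..d}" using Aset_sub[of P] by (auto simp: A1_A2_def)
      have "cnt (Ccol i) (k,m) = 2" using xi[OF i1] i by (simp add: ind_def)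
      thus False using C_small[OF L cCL i1] by (simp split: if_splits)
    qed
    have c1: "card A1 = cnt C P" using C_small_card[OF nd(1,2) cC1] by (simp add: A1_A2_def)
    have c2: "card A2 = cnt C Q" using C_small_card[OF nd(3,4) cC2] by (simp add: A1_A2_def)
    have sC: "cnt C (k,m) = cnt C P + cnt C Q" using split_gen[OF Clev mk(2) PQ] .
    have sU: "cnt U (k,m) = cnt U P + cnt U Q" using split_gen[OF Ulev mk(2) PQ] .
    define M where "M = {1..d} - (A1 \<union> A2)"
    have fA: "finite A1" "finite A2" using Aset_fin by (simp_all add: A1_A2_def)
    have cA: "card (A1 \<union> A2) = card A1 + card A2" using card_Un_disjoint[OF fA dis] .
    have subA: "A1 \<union> A2 \<subseteq> {1..d}" using Aset_sub by (auto simp: A1_A2_def)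
    have cM: "card M = d - (card A1 + card A2)"
      using card_Diff_subset[of "A1 \<union> A2" "{1..d}"] fA subA cA by (simp add: M_def)
    have cMl: "card M < cnt U P + cnt U Q" using cM c1 c2 sC sU N cnt_CU[of "(k,m)"] cCL by simp
    have u1: "cnt U P \<le> d - card A1" using N1' cnt_CU[of P] c1 by simp
    have u2: "cnt U Q \<le> d - card A2" using N2' cnt_CU[of Q] c2 by simp
    obtain S1 S2 where S1: "S1 \<subseteq> {1..d}" "S1 \<inter> A1 = {}" "card S1 = cnt U P"
      and S2: "S2 \<subseteq> {1..d}" "S2 \<inter> A2 = {}" "card S2 = cnt U Q" and MS: "M \<subseteq> S1 \<union> S2"
    proof (cases "card M \<le> cnt U P")
      case True
      have "M \<subseteq> {1..d} - A1" by (auto simp: M_def)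
      moreover have "cnt U P \<le> card ({1..d} - A1)" using u1 card_compl by (simp add: A1_A2_def)
      ultimately obtain S1 where "M \<subseteq> S1" "S1 \<subseteq> {1..d} - A1" "card S1 = cnt U P"
        using extend_subset[of M "{1..d} - A1" "cnt U P"] True by auto
      moreover obtain S2 where "S2 \<subseteq> {1..d} - Aset Q" "card S2 = cnt U Q" using small_S[OF nd(3,4) N2'] by blast
      ultimately show ?thesis using that[of S1 S2] by (auto simp: A1_A2_def)
    next
      case False
      have fM: "finite M" by (simp add: M_def)
      obtain S1 where S1: "S1 \<subseteq> M" "card S1 = cnt U P" "finite S1"
        using obtain_subset_with_card_n[of "cnt U P" M] False by auto
      have t1: "M - S1 \<subseteq> {1..d} - A2" by (auto simp: M_def)
      have "card (M - S1) = card M - cnt U P" using card_Diff_subset[OF S1(3) S1(1)] S1(2) by simp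
      hence t2: "card (M - S1) \<le> cnt U Q" using cMl by simp
      have t3: "cnt U Q \<le> card ({1..d} - A2)" using u2 card_compl by (simp add: A1_A2_def)
      obtain S2 where "M - S1 \<subseteq> S2" "S2 \<subseteq> {1..d} - A2" "card S2 = cnt U Q"
        using extend_subset[OF t1 _ t2 t3] by auto
      thus ?thesis using that[of S1 S2] S1 by (auto simp: M_def)
    qed
    have cov: "\<forall>i\<in>{1..d}. ind (Aset P) i + ind S1 i + (ind (Aset Q) i + ind S2 i) \<ge> 1"
      using MS by (auto simp: ind_def M_def A1_A2_def)
    show ?thesis
      by (rule two_small[OF mk PQ N1' N2' N S1(1) _ S1(3) S2(1) _ S2(3) cov])
         (use S1(2) S2(2) in \<open>auto simp: A1_A2_def\<close>)
  qed
qed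

end

context setting begin

lemma mixed:
  assumes mk: "m < 2^k" "k < j" and PQ: "kids k m P Q"
    and N1: "cnt (C \<union> U) P \<le> d" and N2: "cnt (C \<union> U) Q > d"
    and IH: "\<exists>Uc. loc Uc Q \<and> allok Uc Q"
  shows "\<exists>Uc. loc Uc (k,m) \<and> allok Uc (k,m)"
proof -
  have nd: "P \<in> dyadic" "fst P \<le> j" "Q \<in> dyadic" "fst Q \<le> j" using kids_node[OF PQ mk(1,2)] by auto
  have L: "(k,m) \<in> dyadic" "fst (k,m) \<le> j" using mk by (auto simp: dyadic_def)
  have N: "cnt (C \<union> U) (k,m) > d" using split_gen[OF Hlev mk(2) PQ] N2 by simp
  define A1 where "A1 = Aset P"
  have cC1: "cnt C P \<le> d" using N1 cnt_CU by simp
  have cA1: "card A1 = cnt C P" using C_small_card[OF nd(1,2) cC1] by (simp add: A1_def)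
  have fin: "\<exists>Uc. loc Uc (k,m) \<and> allok Uc (k,m)"
    if U1: "loc U1 P" "allok U1 P" and U2: "loc U2 Q" "allok U2 Q"
      and b: "bal (\<lambda>i. cnt (Hc U1 i) P + cnt (Hc U2 i) Q)" for U1 U2
  proof -
    have "bal (\<lambda>i. cnt (Hc (\<lambda>i. U1 i \<union> U2 i) i) (k,m))"
      by (rule bal_via[OF combine_gen(1)[OF mk(2) PQ U1(1) U2(1)] b])
    hence "okat (C \<union> U) (Hc (\<lambda>i. U1 i \<union> U2 i)) (k,m)" using okat_big N by blast
    thus ?thesis using combine_gen(2)[OF mk(2) PQ U1(1) U2(1) U1(2) U2(2)] by blast
  qed
  show ?thesis
  proof (cases "cnt (C \<union> U) P = d")
    case True
    obtain S where S: "S \<subseteq> {1..d} - Aset P" "card S = cnt U P" using small_S[OF nd(1,2) N1] by blast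
    obtain U1 where U1: "loc U1 P" "allok U1 P" "\<forall>i\<in>{1..d}. cnt (U1 i) P = (if i \<in> S then 1 else 0)"
      using small[OF nd(1,2) N1, of S] S by blast
    obtain U2 where U2: "loc U2 Q" "allok U2 Q" using IH by blast
    have fS: "finite S" using S(1) finite_subset by blast
    have "card (A1 \<union> S) = card A1 + card S"
      using card_Un_disjoint[OF Aset_fin[of P] fS] S(1) by (auto simp: A1_def)
    hence "card (A1 \<union> S) = card {1..d}" using cA1 S(2) True cnt_CU[of P] by simp
    hence cov: "A1 \<union> S = {1..d}"
      using card_subset_eq[of "{1..d}" "A1 \<union> S"] S(1) Aset_sub[of P] by (auto simp: A1_def)
    have one: "cnt (Hc U1 i) P = 1" if i: "i \<in> {1..d}" for i
    proof -
      have "cnt (Hc U1 i) P = ind A1 i + ind S i" using small_cnt[OF nd(1,2) N1 U1(1) i U1(3)] by (simp add: A1_def)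
      thus ?thesis using cov i S(1) by (auto simp: ind_def A1_def)
    qed
    have bg: "bal (\<lambda>i. cnt (Hc U2 i) Q)" using big_bal[OF U2(2) nd(4) N2] .
    have "bal (\<lambda>i. cnt (Hc U1 i) P + cnt (Hc U2 i) Q)"
      unfolding bal_def
    proof (intro ballI)
      fix i k assume ik: "i \<in> {1..d}" "k \<in> {1..d}"
      have "\<eta> * real (cnt (Hc U2 i) Q) \<le> real (cnt (Hc U2 k) Q)" using bg ik by (simp add: bal_def)
      thus "\<eta> * real (cnt (Hc U1 i) P + cnt (Hc U2 i) Q) \<le> real (cnt (Hc U1 k) P + cnt (Hc U2 k) Q)"
        using one ik eta2 by (simp add: distrib_left)
    qed
    thus ?thesis using fin[OF U1(1,2) U2] by blast
  next
    case False
    hence N1l: "cnt (C \<union> U) P < d" using N1 by simp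
    have "restr U Q = {} \<or> restr C Q = {}" using prev_use[OF mk PQ N1l] N2 by simp
    thus ?thesis
    proof
      assume UQ: "restr U Q = {}"
      obtain U2 where U2: "loc U2 Q" "allok U2 Q" using IH by blast
      define v where "v i = cnt (Ccol i) Q" for i
      define x where "x i = cnt (Ccol i) (k,m)" for i
      have U2e: "cnt (Hc U2 i) Q = v i" if i: "i \<in> {1..d}" for i
      proof -
        have "U2 i = {}" using loc_sub[OF U2(1) i] UQ by blast
        thus ?thesis using cnt_Hc[of U2 i Q] i by (simp add: v_def)
      qed
      have cCQ: "cnt C Q > d" using N2 cnt_CU[of Q] UQ by simp
      have cCL: "cnt C (k,m) > d" using split_gen[OF Clev mk(2) PQ] cCQ by simp
      have xv: "x i = ind A1 i + v i" if i: "i \<in> {1..d}" for i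
        using split_gen[OF Ccol_lev[OF i] mk(2) PQ] C_small[OF nd(1,2) cC1 i]
        by (simp add: x_def v_def ind_def A1_def)
      have ex: "(\<lambda>i. cnt (Ccol i) (k,m)) = x" by (rule ext) (simp add: x_def)
      have ev: "(\<lambda>i. cnt (Ccol i) Q) = v" by (rule ext) (simp add: v_def)
      have bx: "bal x" using Cok[OF L] cCL ex by (auto simp: okat_def)
      have bv: "bal v" using Cok[OF nd(3,4)] cCQ ev by (auto simp: okat_def)
      have px: "x i \<ge> 1" if "i \<in> {1..d}" for i using all_present[OF L cCL that] by (simp add: x_def)
      define B where "B = {1..d} - A1"
      have cB: "cnt U P \<le> card B" using card_compl[of P] cA1 N1 cnt_CU[of P] by (simp add: B_def A1_def)
      obtain S where S: "S \<subseteq> B" "card S = cnt U P" and gr: "\<forall>s\<in>S. \<forall>t\<in>B-S. x s \<le> x t"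
        using greedy[of B "cnt U P" x] cB by (auto simp: B_def)
      obtain U1 where U1: "loc U1 P" "allok U1 P" "\<forall>i\<in>{1..d}. cnt (U1 i) P = (if i \<in> S then 1 else 0)"
        using small[OF nd(1,2) N1, of S] S by (auto simp: B_def A1_def)
      have y: "cnt (Hc U1 i) P + cnt (Hc U2 i) Q = x i + ind S i" if i: "i \<in> {1..d}" for i
        using small_cnt[OF nd(1,2) N1 U1(1) i U1(3)] U2e[OF i] xv[OF i] by (simp add: A1_def)
      have "bal (\<lambda>i. cnt (Hc U1 i) P + cnt (Hc U2 i) Q)"
        unfolding bal_def
      proof (intro ballI)
        fix i k assume i: "i \<in> {1..d}" and k: "k \<in> {1..d}"
        have xik: "\<eta> * real (x i) \<le> real (x k)" using bx i k by (simp add: bal_def)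
        have "\<eta> * real (x i + ind S i) \<le> real (x k + ind S k)"
        proof (cases "i \<in> S")
          case False thus ?thesis using xik by (simp add: ind_def)
        next
          case iS: True
          hence iA: "i \<notin> A1" using S(1) by (auto simp: B_def)
          have xi: "x i = v i" using xv[OF i] iA by (simp add: ind_def)
          show ?thesis
          proof (cases "k \<in> S")
            case True thus ?thesis using xik iS eta2 by (simp add: ind_def distrib_left)
          next
            case kS: False
            show ?thesis
            proof (cases "k \<in> A1")
              case True
              have xk: "x k = v k + 1" using xv[OF k] True by (simp add: ind_def)
              have "\<eta> * real (v i) \<le> real (v k)" using bv i k by (simp add: bal_def)
              thus ?thesis using xi xk iS kS eta2 by (simp add: ind_def distrib_left)
            next
              case False
              hence "k \<in> B - S" using k kS by (simp add: B_def)
              hence le: "x i \<le> x k" using gr iS by blast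
              have "\<eta> * real (x i + 1) \<le> \<eta> * real (x k + 1)" using le eta0 by simp
              also have "\<dots> \<le> real (x k)" using eta_1[OF px[OF k]] .
              finally show ?thesis using iS kS by (simp add: ind_def)
            qed
          qed
        qed
        thus "\<eta> * real (cnt (Hc U1 i) P + cnt (Hc U2 i) Q) \<le> real (cnt (Hc U1 k) P + cnt (Hc U2 k) Q)"
          using y[OF i] y[OF k] by simp
      qed
      thus ?thesis using fin[OF U1(1,2) U2] by blast
    next
      assume CQ: "restr C Q = {}"
      obtain S where S: "S \<subseteq> {1..d} - Aset P" "card S = cnt U P" using small_S[OF nd(1,2) N1] by blast
      obtain U1 where U1: "loc U1 P" "allok U1 P" "\<forall>i\<in>{1..d}. cnt (U1 i) P = (if i \<in> S then 1 else 0)"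
        using small[OF nd(1,2) N1, of S] S by blast
      have fS: "finite S" using S(1) finite_subset by blast
      define W where "W = {1..d} - (A1 \<union> S)"
      have cAS: "card (A1 \<union> S) = cnt (C \<union> U) P"
        using card_Un_disjoint[OF Aset_fin[of P] fS] S cA1 cnt_CU[of P] by (auto simp: A1_def)
      have subAS: "A1 \<union> S \<subseteq> {1..d}" using S(1) Aset_sub[of P] by (auto simp: A1_def)
      have cW: "card W = d - cnt (C \<union> U) P"
        using card_Diff_subset[of "A1 \<union> S" "{1..d}"] Aset_fin[of P] fS subAS cAS by (simp add: W_def A1_def)
      define n2 where "n2 = cnt U Q"
      have n2N: "n2 = cnt (C \<union> U) Q" using cnt_CU[of Q] CQ by (simp add: n2_def)
      define q r where "q = n2 div d" "r = n2 mod d"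
      have rd: "r < d" using d1 by (simp add: q_r_def)
      have "0 < q" using N2 n2N d1 div_greater_zero_iff[of n2 d] by (simp add: q_r_def)
      hence q1: "1 \<le> q" by simp
      obtain R where R: "R \<subseteq> {1..d}" "card R = r" and Ralt: "R \<inter> (A1 \<union> S) = {} \<or> W \<subseteq> R"
      proof (cases "r \<le> card W")
        case True
        then obtain R where "R \<subseteq> W" "card R = r" "finite R" by (rule obtain_subset_with_card_n)
        thus ?thesis using that[of R] by (auto simp: W_def)
      next
        case False
        have "W \<subseteq> {1..d}" by (auto simp: W_def)
        then obtain R where "W \<subseteq> R" "R \<subseteq> {1..d}" "card R = r"
          using extend_subset[of W "{1..d}" r] False rd by auto
        thus ?thesis using that[of R] by auto
      qed
      obtain mq where mq: "Q = (Suc k, mq)" "mq < 2^Suc k" using kids_Q[OF PQ mk(1)] by blast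
      have "\<exists>Uc. loc Uc Q \<and> allok Uc Q \<and>
          (\<forall>i\<in>{1..d}. cnt (Uc i) Q = cnt U Q div d + (if i \<in> R then 1 else 0))"
        using pureU[of mq "Suc k" R] mq mk(2) CQ R by (simp add: n2_def q_r_def)
      then obtain U2 where U2: "loc U2 Q" "allok U2 Q"
          "\<forall>i\<in>{1..d}. cnt (U2 i) Q = cnt U Q div d + (if i \<in> R then 1 else 0)"
        by blast
      have y: "cnt (Hc U1 i) P + cnt (Hc U2 i) Q = ind A1 i + ind S i + ind R i + q" if i: "i \<in> {1..d}" for i
        using small_cnt[OF nd(1,2) N1 U1(1) i U1(3)] cnt_Hc[of U2 i Q, OF loc_subU[OF U2(1) i] i]
          Ccol_zero[OF CQ i] U2(3) i by (simp add: A1_def ind_def n2_def q_r_def)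
      have AS: "A1 \<inter> S = {}" using S(1) by (auto simp: A1_def)
      have "bal (\<lambda>i. cnt (Hc U1 i) P + cnt (Hc U2 i) Q)"
      proof (cases "R \<inter> (A1 \<union> S) = {}")
        case True
        show ?thesis
        proof (rule bal_range[of q _ 1])
          show "\<forall>i\<in>{1..d}. q \<le> cnt (Hc U1 i) P + cnt (Hc U2 i) Q \<and> cnt (Hc U1 i) P + cnt (Hc U2 i) Q \<le> q + 1"
          proof
            fix i assume i: "i \<in> {1..d}"
            have "ind A1 i + ind S i + ind R i \<le> 1" using True AS by (auto simp: ind_def)
            thus "q \<le> cnt (Hc U1 i) P + cnt (Hc U2 i) Q \<and> cnt (Hc U1 i) P + cnt (Hc U2 i) Q \<le> q + 1"
              using y[OF i] by simp
          qed
          show "\<eta> * real (q + 1) \<le> real q" using eta_1[OF q1] .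
        qed
      next
        case False
        hence WR: "W \<subseteq> R" using Ralt by blast
        show ?thesis
        proof (rule bal_range[of "q+1" _ 1])
          show "\<forall>i\<in>{1..d}. q + 1 \<le> cnt (Hc U1 i) P + cnt (Hc U2 i) Q \<and> cnt (Hc U1 i) P + cnt (Hc U2 i) Q \<le> q + 1 + 1"
          proof
            fix i assume i: "i \<in> {1..d}"
            have "ind A1 i + ind S i \<le> 1" using AS by (auto simp: ind_def)
            moreover have "ind A1 i + ind S i + ind R i \<ge> 1" using WR i by (auto simp: ind_def W_def)
            moreover have "ind R i \<le> 1" by (simp add: ind_def)
            ultimately show "q + 1 \<le> cnt (Hc U1 i) P + cnt (Hc U2 i) Q \<and> cnt (Hc U1 i) P + cnt (Hc U2 i) Q \<le> q + 1 + 1"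
              using y[OF i] by simp
          qed
          show "\<eta> * real (q + 1 + 1) \<le> real (q + 1)" using eta_1[of "q+1"] by simp
        qed
      qed
      thus ?thesis using fin[OF U1(1,2) U2(1,2)] by blast
    qed
  qed
qed

end

context setting begin

lemma main_aux:
  "j - k = h \<Longrightarrow> m < 2^k \<Longrightarrow> k \<le> j \<Longrightarrow> \<exists>Uc. loc Uc (k,m) \<and> allok Uc (k,m)"
proof (induction h arbitrary: k m rule: less_induct)
  case (less h)
  have L: "(k,m) \<in> dyadic" "fst (k,m) \<le> j" using less.prems by (auto simp: dyadic_def)
  show ?case
  proof (cases "cnt (C \<union> U) (k,m) \<le> d")
    case True
    obtain S where S: "S \<subseteq> {1..d} - Aset (k,m)" "card S = cnt U (k,m)" using small_S[OF L True] by blast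
    show ?thesis using small[OF L True, of S] S by blast
  next
    case False
    hence N: "cnt (C \<union> U) (k,m) > d" by simp
    have kj: "k < j"
    proof (rule ccontr)
      assume "\<not> k < j" hence "k = j" using less.prems(3) by simp
      thus False using top_small[of m] N by simp
    qed
    define P where "P = (Suc k, 2*m)"
    define Q where "Q = (Suc k, 2*m+1)"
    have PQ: "kids k m P Q" "kids k m Q P" by (auto simp: kids_def P_def Q_def)
    have hlt: "j - Suc k < h" using kj less.prems(1) by simp
    have dyP: "2*m < 2^Suc k" "2*m+1 < 2^Suc k" using less.prems(2) by auto
    have IHP: "\<exists>Uc. loc Uc P \<and> allok Uc P" using less.IH[OF hlt refl dyP(1)] kj by (simp add: P_def)
    have IHQ: "\<exists>Uc. loc Uc Q \<and> allok Uc Q" using less.IH[OF hlt refl dyP(2)] kj by (simp add: Q_def)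
    have nd: "P \<in> dyadic" "fst P \<le> j" "Q \<in> dyadic" "fst Q \<le> j" using kids_node[OF PQ(1) less.prems(2) kj] by auto
    consider "cnt (C \<union> U) P > d" "cnt (C \<union> U) Q > d" | "cnt (C \<union> U) P \<le> d" "cnt (C \<union> U) Q \<le> d"
      | "cnt (C \<union> U) P \<le> d" "cnt (C \<union> U) Q > d" | "cnt (C \<union> U) P > d" "cnt (C \<union> U) Q \<le> d"
      by linarith
    thus ?thesis
    proof cases
      case 1
      obtain U1 where U1: "loc U1 P" "allok U1 P" using IHP by blast
      obtain U2 where U2: "loc U2 Q" "allok U2 Q" using IHQ by blast
      have "bal (\<lambda>i. cnt (Hc U1 i) P + cnt (Hc U2 i) Q)"
        by (rule bal_add[OF big_bal[OF U1(2) nd(2) 1(1)] big_bal[OF U2(2) nd(4) 1(2)]])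
      hence "bal (\<lambda>i. cnt (Hc (\<lambda>i. U1 i \<union> U2 i) i) (k,m))"
        by (rule bal_via[OF combine_gen(1)[OF kj PQ(1) U1(1) U2(1)]])
      hence "okat (C \<union> U) (Hc (\<lambda>i. U1 i \<union> U2 i)) (k,m)" using okat_big N by blast
      thus ?thesis using combine_gen(2)[OF kj PQ(1) U1(1) U2(1) U1(2) U2(2)] by blast
    next
      case 2 thus ?thesis using small_small[OF less.prems(2) kj _ _ N] by (simp add: P_def Q_def)
    next
      case 3 thus ?thesis using mixed[OF less.prems(2) kj PQ(1) 3 IHQ] by blast
    next
      case 4 thus ?thesis using mixed[OF less.prems(2) kj PQ(2) 4(2,1) IHP] by blast
    qed
  qed
qed

lemma result:
  "\<exists>Ucol. colouring d Ucol U \<and> homogeneous_colouring \<eta> d j (\<lambda>i. Ccol i \<union> Ucol i) (C \<union> U)"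
proof -
  obtain Uc where Uc: "loc Uc (0,0)" "allok Uc (0,0)" using main_aux[of 0 j 0] by auto
  have col: "colouring d Uc U" using Uc(1) restr_root[OF Ulev] by (simp add: loc_def colouring_def)
  have Ccol: "colouring d Ccol C" by (rule Ccol_col)
  have col2: "colouring d (\<lambda>i. Ccol i \<union> Uc i) (C \<union> U)"
    unfolding colouring_def
  proof
    show "(\<Union>i\<in>{1..d}. Ccol i \<union> Uc i) = C \<union> U" using col Ccol unfolding colouring_def by blast
    show "\<forall>i\<in>{1..d}. \<forall>i'\<in>{1..d}. i \<noteq> i' \<longrightarrow> (Ccol i \<union> Uc i) \<inter> (Ccol i' \<union> Uc i') = {}"
    proof (intro ballI impI)
      fix i i' assume ii: "i \<in> {1..d}" "i' \<in> {1..d}" "i \<noteq> i'"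
      have "Ccol i \<inter> Ccol i' = {}" "Uc i \<inter> Uc i' = {}" using col Ccol ii unfolding colouring_def by auto
      moreover have "Ccol i \<subseteq> C" "Ccol i' \<subseteq> C" using Ccol_sub ii by auto
      moreover have "Uc i \<subseteq> U" "Uc i' \<subseteq> U" using loc_subU[OF Uc(1)] ii by auto
      ultimately show "(Ccol i \<union> Uc i) \<inter> (Ccol i' \<union> Uc i') = {}" using UC by blast
    qed
  qed
  have ok: "okat (C \<union> U) (Hc Uc) L" if "L \<in> dyadic" "fst L \<le> j" for L
  proof -
    obtain a b where ab: "L = (a,b)" by (cases L)
    have "dsub L (0,0)" using that ab dsub_root by (auto simp: dyadic_def)
    thus ?thesis using Uc(2) that unfolding allok_def by blast
  qed
  have "homogeneous_colouring \<eta> d j (\<lambda>i. Ccol i \<union> Uc i) (C \<union> U)"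
    unfolding homogeneous_colouring_def
  proof (intro conjI ballI impI)
    show "C \<union> U \<subseteq> dyadic_level j" by (rule Hlev)
    show "colouring d (\<lambda>i. Ccol i \<union> Uc i) (C \<union> U)" by (rule col2)
    fix L assume "L \<in> dyadic" "fst L \<le> j"
    from ok[OF this] show "d < cnt (C \<union> U) L \<and>
          \<eta> * real (Max ((\<lambda>i. cnt (Ccol i \<union> Uc i) L) ` {1..d})) \<le> real (Min ((\<lambda>i. cnt (Ccol i \<union> Uc i) L) ` {1..d})) \<or>
          cnt (C \<union> U) L \<le> d \<and> (\<forall>i\<in>{1..d}. cnt (Ccol i \<union> Uc i) L \<le> 1)"
      by (simp add: okat_def bal_MaxMin Hc_def)
  qed
  thus ?thesis using col by blast
qed

end

theorem theorem2p1:
  fixes d j :: nat and \<eta> :: real and C U :: "dyad set" and Ccol :: "nat \<Rightarrow> dyad set"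
  assumes "d \<ge> 1" and "0 < \<eta>" and "\<eta> \<le> 1/2"
    and "C \<subseteq> dyadic_level j"
    and "homogeneous_colouring \<eta> d j Ccol C"
    and "U \<subseteq> dyadic_level j" and "U \<inter> C = {}"
    and "previsible d j C U"
  shows "\<exists>Ucol. colouring d Ucol U \<and>
           homogeneous_colouring \<eta> d j (\<lambda>i. Ccol i \<union> Ucol i) (C \<union> U)"
proof -
  interpret setting d j \<eta> C U Ccol using assms by unfold_locales
  show ?thesis by (rule result)
qed


end
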